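(* Let $a>0$ and $0\le\rho<1$. There exists a constant $c=c(a,\rho)>0$ such that every probability measure $\nu$ on $\mathbb{Z}$ with $m_1(\nu)=\sum_k|k|\nu(k)\le a$ and $\nu(\beta\mathbb{Z}+r)\le\rho$ for all integers $\beta\notin\{1,-1\}$ and all $r\in\mathbb{Z}$ (with $0\cdot\mathbb{Z}+r=\{r\}$) satisfies $|\hat{\nu}(t)|\le e^{-ct^2}$ for all $t\in(-1/2,1/2]$.
   Context: The Fourier transform of a probability measure $\nu$ on $\mathbb{Z}$ is $\hat{\nu}(t)=\sum_{k\in\mathbb{Z}}\nu(k)e^{2\pi ikt}$. *)

theory Defs
  imports "HOL-Probability.Probability"
begin

definition fourier_pmf :: "int pmf \<Rightarrow> real \<Rightarrow> complex" where
  "fourier_pmf \<nu> t = (\<Sum>\<^sub>\<infinity>k. complex_of_real (pmf \<nu> k) * cis (2 * pi * real_of_int k * t))"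

definition first_moment :: "int pmf \<Rightarrow> ennreal" where
  "first_moment \<nu> = (\<integral>\<^sup>+ k. ennreal (real_of_int \<bar>k\<bar>) \<partial>measure_pmf \<nu>)"

definition arith_prog :: "int \<Rightarrow> int \<Rightarrow> int set" where
  "arith_prog \<beta> r = {\<beta> * j + r | j. True}"

end

theory Submission
  imports Defs
begin

lemma one_minus_cos_ge:
  fixes x :: real assumes "\<bar>x\<bar> \<le> 1" shows "x\<^sup>2 / 4 \<le> 1 - cos x"
proof -
  obtain s where "cos x = (\<Sum>m<4. cos_coeff m * x ^ m) + (cos(s + 1/2 * real 4 * pi) / fact 4) * x ^ 4"
    using Maclaurin_cos_expansion by blast
  hence eq: "cos x = 1 - x\<^sup>2/2 + cos(s + 2*pi) / 24 * x^4"
    by (simp add: cos_coeff_def lessThan_nat_numeral fact_numeral power2_eq_square)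
  have "cos(s + 2*pi) / 24 * x^4 \<le> x^4 / 24" 
    proof -
    have "cos(s + 2*pi) / 24 * x^4 \<le> 1 / 24 * x^4"
      by (intro mult_right_mono divide_right_mono) (auto simp: zero_le_even_power)
    thus ?thesis by simp
  qed
  moreover have "x^4 \<le> x\<^sup>2"
  proof -
    have "x^4 = x\<^sup>2 * x\<^sup>2" by algebra
    also have "\<dots> \<le> x\<^sup>2 * 1" using assms by (intro mult_left_mono) (auto simp: abs_square_le_1)
    finally show ?thesis by simp
  qed
  ultimately show ?thesis using eq zero_le_power2[of x] by linarith
qed

lemma cos_gt_near:
  fixes x \<delta> :: real assumes "cos x > cos \<delta>" "0 < \<delta>" "\<delta> \<le> pi"
  shows "\<exists>n::int. \<bar>x - 2*pi*n\<bar> < \<delta>"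
proof -
  define n where "n = \<lfloor>x/(2*pi) + 1/2\<rfloor>"
  define y where "y = x - 2*pi*n"
  have "n \<le> x/(2*pi) + 1/2" "x/(2*pi) + 1/2 < n + 1" unfolding n_def by linarith+
  hence "2*pi*n \<le> x + pi" "x + pi < 2*pi*n + 2*pi" using pi_gt_zero by (simp_all add: field_simps)
  hence yb: "\<bar>y\<bar> \<le> pi" unfolding y_def by linarith
  have "cos y = cos x" unfolding y_def
    by (simp add: cos_diff)
  show ?thesis
  proof (rule ccontr)
    assume "\<not> ?thesis"
    hence "\<delta> \<le> \<bar>y\<bar>" unfolding y_def using not_le by blast
    hence "cos \<bar>y\<bar> \<le> cos \<delta>" using assms yb by (intro cos_monotone_0_pi_le) auto
    moreover have "cos \<bar>y\<bar> = cos y" by (simp add: abs_if)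
    ultimately show False using \<open>cos y = cos x\<close> assms by linarith
  qed
qed

lemma fourier_norm_eq:
  "norm (fourier_pmf \<nu> t) = measure_pmf.expectation \<nu> (\<lambda>k. cos (2*pi*real_of_int k*t - Arg (fourier_pmf \<nu> t)))"
proof -
  define z where "z = fourier_pmf \<nu> t"
  define \<theta> where "\<theta> = Arg z"
  define f where "f = (\<lambda>k. complex_of_real (pmf \<nu> k) * cis (2 * pi * real_of_int k * t))"
  have as: "Infinite_Set_Sum.abs_summable_on f UNIV"
    by (rule abs_summable_on_comparison_test'[OF pmf_abs_summable[of \<nu>]]) (simp add: f_def norm_mult)
  have z: "z = infsetsum f UNIV"
    unfolding z_def fourier_pmf_def f_def[symmetric] using infsetsum_infsum[OF as] by simp
  have "norm z = Re (cis (-\<theta>) * z)"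
  proof -
    have "z = complex_of_real (norm z) * cis \<theta>" unfolding \<theta>_def
      by (metis rcis_cmod_Arg rcis_def)
    hence "cis (-\<theta>) * z = complex_of_real (norm z) * (cis (-\<theta>) * cis \<theta>)" by (metis mult.left_commute)
    also have "cis (-\<theta>) * cis \<theta> = 1" by (simp add: cis_mult)
    finally show ?thesis by simp
  qed
  also have "cis (-\<theta>) * z = infsetsum (\<lambda>k. cis (-\<theta>) * f k) UNIV"
    unfolding z using as by (simp add: infsetsum_cmult_right)
  also have "Re \<dots> = infsetsum (\<lambda>k. Re (cis (-\<theta>) * f k)) UNIV"
    using as by (intro Re_infsetsum) auto
  also have "\<dots> = infsetsum (\<lambda>k. pmf \<nu> k * cos (2*pi*real_of_int k*t - \<theta>)) UNIV"
    by (intro infsetsum_cong) (simp_all add: f_def cos_diff algebra_simps)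
  also have "\<dots> = measure_pmf.expectation \<nu> (\<lambda>k. cos (2*pi*real_of_int k*t - \<theta>))"
    by (rule pmf_expectation_eq_infsetsum[symmetric])
  finally show ?thesis unfolding z_def \<theta>_def .
qed


lemma int_abs_lt1: fixes X :: int assumes "\<bar>real_of_int X\<bar> < 1" shows "X = 0"
  using assms by linarith

lemma cluster_ap:
  fixes t \<phi> \<epsilon> :: real and M :: nat and S :: "int set"
  assumes M: "M \<ge> 1" and t: "-1/2 < t" "t \<le> 1/2" "t \<noteq> 0"
    and close: "\<forall>k\<in>S. \<exists>n::int. \<bar>real_of_int k * t - \<phi> - real_of_int n\<bar> < \<epsilon>"
    and box: "S \<subseteq> {k. \<bar>k\<bar> \<le> int M}"
    and cs: "(\<bar>t\<bar> < 1/(8*M) \<and> \<epsilon> = \<bar>t\<bar>/4) \<or> (1/(8*M) \<le> \<bar>t\<bar> \<and> \<epsilon> = 1/(32*M))"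
  shows "\<exists>\<beta> r. \<beta> \<notin> {1,-1} \<and> S \<subseteq> arith_prog \<beta> r"
proof -
  from close obtain n where n: "\<And>k. k \<in> S \<Longrightarrow> \<bar>real_of_int k * t - \<phi> - real_of_int (n k)\<bar> < \<epsilon>"
    by metis
  have pair: "\<bar>real_of_int (k - l) * t - real_of_int (n k - n l)\<bar> < 2*\<epsilon>" if "k \<in> S" "l \<in> S" for k l
  proof -
    have "real_of_int (k - l) * t - real_of_int (n k - n l)
        = (real_of_int k * t - \<phi> - real_of_int (n k)) - (real_of_int l * t - \<phi> - real_of_int (n l))"
      by (simp add: algebra_simps)
    thus ?thesis using n[OF that(1)] n[OF that(2)] by linarith
  qed
  have dbound: "\<bar>real_of_int (k - l)\<bar> \<le> 2 * real M" if "k \<in> S" "l \<in> S" for k l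
  proof -
    have "\<bar>k\<bar> \<le> int M" "\<bar>l\<bar> \<le> int M" using box that by auto
    hence "\<bar>k - l\<bar> \<le> 2 * int M" by linarith
    hence "real_of_int \<bar>k - l\<bar> \<le> real_of_int (2 * int M)" by (simp only: of_int_le_iff)
    thus ?thesis by simp
  qed
  have Mpos: "real M \<ge> 1" using M by simp
  have sing: "\<exists>\<beta> r. \<beta> \<notin> {1,-1} \<and> S \<subseteq> arith_prog \<beta> r" if "S \<subseteq> {k0}" for k0
  proof -
    have "S \<subseteq> arith_prog 0 k0" using that unfolding arith_prog_def by auto
    thus ?thesis by (intro exI[of _ 0] exI[of _ k0]) auto
  qed
  from cs show ?thesis
  proof
    assume sm: "\<bar>t\<bar> < 1/(8*M) \<and> \<epsilon> = \<bar>t\<bar>/4"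
    show ?thesis
    proof (cases "S = {}")
      case True thus ?thesis using sing by blast
    next
      case False
      then obtain k0 where k0: "k0 \<in> S" by blast
      have "S \<subseteq> {k0}"
      proof
        fix k assume k: "k \<in> S"
        show "k \<in> {k0}"
        proof (rule ccontr)
          assume "k \<notin> {k0}"
          hence d0: "k - k0 \<noteq> 0" by simp
          define d where "d = real_of_int (k - k0)"
          define m where "m = n k - n k0"
          have P: "\<bar>d * t - real_of_int m\<bar> < \<bar>t\<bar>/2" using pair[OF k k0] sm unfolding d_def m_def by simp
          have d1: "\<bar>d\<bar> \<ge> 1" unfolding d_def using d0 by linarith
          have d2: "\<bar>d\<bar> \<le> 2 * real M" unfolding d_def using dbound[OF k k0] .
          have "\<bar>d * t\<bar> = \<bar>d\<bar> * \<bar>t\<bar>" by (simp add: abs_mult)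
          have dt1: "\<bar>d\<bar> * \<bar>t\<bar> \<ge> \<bar>t\<bar>" using mult_right_mono[OF d1 abs_ge_zero[of t]] by simp
          have "\<bar>d\<bar> * \<bar>t\<bar> \<le> 2 * real M * (1/(8*M))" using d2 sm
            by (intro mult_mono) auto
          also have "\<dots> = 1/4" using Mpos by simp
          finally have dt2: "\<bar>d\<bar> * \<bar>t\<bar> \<le> 1/4" .
          show False
          proof (cases "m = 0")
            case True thus False using P dt1 \<open>\<bar>d * t\<bar> = \<bar>d\<bar> * \<bar>t\<bar>\<close> t by simp
          next
            case False
            hence "\<bar>real_of_int m\<bar> \<ge> 1" by linarith
            thus False using P dt2 \<open>\<bar>d * t\<bar> = \<bar>d\<bar> * \<bar>t\<bar>\<close> t by linarith
          qed
        qed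
      qed
      thus ?thesis using sing by blast
    qed
  next
    assume lg: "1/(8*M) \<le> \<bar>t\<bar> \<and> \<epsilon> = 1/(32*M)"
    show ?thesis
    proof (cases "\<exists>k0. S \<subseteq> {k0}")
      case True thus ?thesis using sing by blast
    next
      case False
      then obtain k0 k1 where k0: "k0 \<in> S" and k1: "k1 \<in> S" and ne: "k1 \<noteq> k0"
        by (metis insertI1 subsetI singletonD)
      define d1 where "d1 = k1 - k0"
      define m1 where "m1 = n k1 - n k0"
      have d1nz: "d1 \<noteq> 0" using ne unfolding d1_def by simp
      have eps2: "2 * \<epsilon> = 1/(16*M)" using lg by simp
      have key: "(k - k0) * m1 = d1 * (n k - n k0)" if k: "k \<in> S" for k
      proof -
        define d where "d = k - k0"
        define m where "m = n k - n k0"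
        define X where "X = d * m1 - d1 * m"
        have A: "\<bar>real_of_int d * t - real_of_int m\<bar> \<le> 1/(16*M)"
          using pair[OF k k0] eps2 unfolding d_def m_def by linarith
        have B: "\<bar>real_of_int d1 * t - real_of_int m1\<bar> \<le> 1/(16*M)"
          using pair[OF k1 k0] eps2 unfolding d1_def m1_def by linarith
        have dd: "\<bar>real_of_int d\<bar> \<le> 2 * real M" using dbound[OF k k0] unfolding d_def .
        have dd1: "\<bar>real_of_int d1\<bar> \<le> 2 * real M" using dbound[OF k1 k0] unfolding d1_def .
        have eq: "real_of_int X = real_of_int d1 * (real_of_int d * t - real_of_int m)
                    - real_of_int d * (real_of_int d1 * t - real_of_int m1)"
          unfolding X_def by (simp add: algebra_simps)
        have "\<bar>real_of_int d1 * (real_of_int d * t - real_of_int m)\<bar> \<le> 2 * real M * (1/(16*M))"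
          unfolding abs_mult using A dd1 by (intro mult_mono) auto
        moreover have "\<bar>real_of_int d * (real_of_int d1 * t - real_of_int m1)\<bar> \<le> 2 * real M * (1/(16*M))"
          unfolding abs_mult using B dd by (intro mult_mono) auto
        moreover have "2 * real M * (1/(16*M)) = 1/8" using Mpos by simp
        ultimately have "\<bar>real_of_int X\<bar> < 1" unfolding eq by linarith
        hence "X = 0" by (rule int_abs_lt1)
        thus ?thesis unfolding X_def d_def m_def by simp
      qed
      define g where "g = gcd d1 m1"
      define \<beta> where "\<beta> = d1 div g"
      define p where "p = m1 div g"
      have gnz: "g \<noteq> 0" using d1nz unfolding g_def by simp
      have d1e: "d1 = \<beta> * g" unfolding \<beta>_def g_def by simp
      have m1e: "m1 = p * g" unfolding p_def g_def by simp
      have cop: "coprime \<beta> p" unfolding \<beta>_def p_def g_def using d1nz by (intro div_gcd_coprime) auto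
      have sub: "S \<subseteq> arith_prog \<beta> k0"
      proof
        fix k assume k: "k \<in> S"
        have "(k - k0) * p * g = \<beta> * (n k - n k0) * g" using key[OF k] d1e m1e by (simp add: ac_simps)
        hence "(k - k0) * p = \<beta> * (n k - n k0)" using gnz by simp
        hence "\<beta> dvd (k - k0) * p" by (metis dvd_triv_left)
        hence "\<beta> dvd (k - k0)" using cop by (simp add: coprime_dvd_mult_left_iff)
        then obtain j where "k - k0 = \<beta> * j" by (elim dvdE)
        hence "k = \<beta> * j + k0" by simp
        thus "k \<in> arith_prog \<beta> k0" unfolding arith_prog_def by blast
      qed
      have "\<beta> \<notin> {1, -1}"
      proof
        assume "\<beta> \<in> {1, -1}"
        hence "d1 dvd m1" using d1e m1e by auto
        then obtain j where j: "m1 = d1 * j" by (elim dvdE)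
        have B: "\<bar>real_of_int d1 * t - real_of_int m1\<bar> < 1/(16*M)"
          using pair[OF k1 k0] eps2 unfolding d1_def m1_def by linarith
        have "\<bar>real_of_int d1 * t - real_of_int m1\<bar> = \<bar>real_of_int d1\<bar> * \<bar>t - real_of_int j\<bar>"
          unfolding j by (simp add: abs_mult[symmetric] algebra_simps)
        moreover have "\<bar>real_of_int d1\<bar> \<ge> 1" using d1nz by linarith
        ultimately have "\<bar>t - real_of_int j\<bar> < 1/(16*M)"
          using B by (smt (verit, best) abs_ge_zero mult_le_cancel_right1)
        moreover have "\<bar>t - real_of_int j\<bar> \<ge> \<bar>t\<bar>"
        proof (cases "j = 0")
          case False
          hence "j \<ge> 1 \<or> j \<le> -1" by linarith
          hence "real_of_int j \<ge> 1 \<or> real_of_int j \<le> -1" by linarith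
          thus ?thesis
          proof
            assume "real_of_int j \<ge> 1" thus ?thesis using t by (simp add: abs_if)
          next
            assume "real_of_int j \<le> -1" thus ?thesis using t by (simp add: abs_if)
          qed
        qed simp
        moreover have "1/(16*M) < 1/(8 * real M)" using Mpos by (simp add: divide_strict_left_mono)
        ultimately show False using lg by linarith
      qed
      thus ?thesis using sub by blast
    qed
  qed
qed

lemma tail_bound:
  fixes a M :: real
  assumes fm: "first_moment \<nu> \<le> ennreal a" and M: "M > 0" and a: "a \<ge> 0"
  shows "measure_pmf.prob \<nu> {k. M < real_of_int \<bar>k\<bar>} \<le> a / M"
proof -
  define T where "T = {k::int. M < real_of_int \<bar>k\<bar>}"
  have "ennreal M * emeasure (measure_pmf \<nu>) T = (\<integral>\<^sup>+ k. ennreal M * indicator T k \<partial>measure_pmf \<nu>)"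
    by (simp add: nn_integral_cmult_indicator)
  also have "\<dots> \<le> (\<integral>\<^sup>+ k. ennreal (real_of_int \<bar>k\<bar>) \<partial>measure_pmf \<nu>)"
    by (intro nn_integral_mono) (auto simp: T_def indicator_def)
  also have "\<dots> \<le> ennreal a" using fm unfolding first_moment_def .
  finally have "ennreal (M * measure_pmf.prob \<nu> T) \<le> ennreal a"
    using M by (simp add: measure_pmf.emeasure_eq_measure ennreal_mult)
  hence "M * measure_pmf.prob \<nu> T \<le> a" using a by (simp add: ennreal_le_iff)
  thus ?thesis unfolding T_def using M by (simp add: field_simps mult.commute)
qed

theorem theorem3p3:
  fixes a \<rho> :: real
  assumes "a > 0" and "0 \<le> \<rho>" and "\<rho> < 1"
  shows "\<exists>c>0. \<forall>\<nu> :: int pmf.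
           first_moment \<nu> \<le> ennreal a \<longrightarrow>
           (\<forall>\<beta> r. \<beta> \<notin> {1, -1} \<longrightarrow> measure_pmf.prob \<nu> (arith_prog \<beta> r) \<le> \<rho>) \<longrightarrow>
           (\<forall>t \<in> {-1/2<..1/2}. norm (fourier_pmf \<nu> t) \<le> exp (- c * t\<^sup>2))"
proof -
  define M :: nat where "M = nat \<lceil>2*a/(1-\<rho>)\<rceil> + 1"
  have M1: "M \<ge> 1" unfolding M_def by simp
  have Mpos: "real M \<ge> 1" using M1 by simp
  have "real M \<ge> 2*a/(1-\<rho>)" unfolding M_def by linarith
  hence "2*a \<le> real M * (1-\<rho>)" using assms by (simp add: field_simps)
  hence aM: "a / real M \<le> (1-\<rho>)/2" using Mpos by (simp add: field_simps)
  define \<eta> :: real where "\<eta> = 1/(8*M)"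
  have \<eta>pos: "\<eta> > 0" unfolding \<eta>_def using Mpos by simp
  have \<eta>le: "\<eta> \<le> 1/8" unfolding \<eta>_def using Mpos by (simp add: field_simps)
  define c where "c = \<eta>^2 * (1-\<rho>)/2"
  have cpos: "c > 0" unfolding c_def using \<eta>pos assms by simp
  show ?thesis
  proof (intro exI[of _ c] conjI cpos allI impI ballI)
    fix \<nu> :: "int pmf" and t :: real
    assume fm: "first_moment \<nu> \<le> ennreal a"
      and ap: "\<forall>\<beta> r. \<beta> \<notin> {1, -1} \<longrightarrow> measure_pmf.prob \<nu> (arith_prog \<beta> r) \<le> \<rho>"
      and tI: "t \<in> {-1/2<..1/2}"
    have t1: "-1/2 < t" and t2: "t \<le> 1/2" using tI by auto
    define z where "z = fourier_pmf \<nu> t"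
    define \<theta> where "\<theta> = Arg z"
    define g where "g = (\<lambda>k::int. cos (2*pi*real_of_int k*t - \<theta>))"
    have nz: "norm z = measure_pmf.expectation \<nu> g"
      unfolding z_def g_def \<theta>_def by (rule fourier_norm_eq)
    define \<epsilon> where "\<epsilon> = (if \<bar>t\<bar> < \<eta> then \<bar>t\<bar>/4 else \<eta>/4)"
    define \<delta> where "\<delta> = 2*pi*\<epsilon>"
    define A where "A = {k. g k > cos \<delta>}"
    define S where "S = A \<inter> {k. \<bar>k\<bar> \<le> int M}"
    have apS: "\<exists>\<beta> r. \<beta> \<notin> {1,-1} \<and> S \<subseteq> arith_prog \<beta> r"
    proof (cases "t = 0")
      case True
      hence "\<delta> = 0" unfolding \<delta>_def \<epsilon>_def using \<eta>pos by simp
      hence "A = {}" unfolding A_def g_def by (auto simp: not_less)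
      hence "S = {}" unfolding S_def by simp
      thus ?thesis by (intro exI[of _ 0]) auto
    next
      case False
      have epos: "\<epsilon> > 0" unfolding \<epsilon>_def using False \<eta>pos by simp
      have ele: "\<epsilon> \<le> 1/2" unfolding \<epsilon>_def using t1 t2 \<eta>le by auto
      show ?thesis
      proof (rule cluster_ap[OF M1 t1 t2 False, where \<phi> = "\<theta>/(2*pi)" and \<epsilon> = \<epsilon>])
        show "\<forall>k\<in>S. \<exists>n::int. \<bar>real_of_int k * t - \<theta>/(2*pi) - real_of_int n\<bar> < \<epsilon>"
        proof
          fix k assume "k \<in> S"
          hence "cos (2*pi*real_of_int k*t - \<theta>) > cos \<delta>" unfolding S_def A_def g_def by simp
          moreover have "0 < \<delta>" "\<delta> \<le> pi" unfolding \<delta>_def using epos ele pi_gt_zero by auto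
          ultimately obtain n :: int where n: "\<bar>2*pi*real_of_int k*t - \<theta> - 2*pi*n\<bar> < \<delta>"
            using cos_gt_near by blast
          have "2*pi*real_of_int k*t - \<theta> - 2*pi*n = (2*pi) * (real_of_int k * t - \<theta>/(2*pi) - real_of_int n)"
            by (simp add: field_simps)
          hence "\<bar>2*pi*real_of_int k*t - \<theta> - 2*pi*n\<bar> = (2*pi) * \<bar>real_of_int k * t - \<theta>/(2*pi) - real_of_int n\<bar>"
            by (simp add: abs_mult)
          hence "\<bar>real_of_int k * t - \<theta>/(2*pi) - real_of_int n\<bar> < \<epsilon>" using n unfolding \<delta>_def by simp
          thus "\<exists>n::int. \<bar>real_of_int k * t - \<theta>/(2*pi) - real_of_int n\<bar> < \<epsilon>" by blast
        qed
        show "S \<subseteq> {k. \<bar>k\<bar> \<le> int M}" unfolding S_def by auto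
        show "(\<bar>t\<bar> < 1/(8*M) \<and> \<epsilon> = \<bar>t\<bar>/4) \<or> (1/(8*M) \<le> \<bar>t\<bar> \<and> \<epsilon> = 1/(32*M))"
          unfolding \<epsilon>_def \<eta>_def by auto
      qed
    qed
    then obtain \<beta> r where \<beta>: "\<beta> \<notin> {1,-1}" and Ssub: "S \<subseteq> arith_prog \<beta> r" by blast
    have PS: "measure_pmf.prob \<nu> S \<le> \<rho>"
      using measure_pmf.finite_measure_mono[OF Ssub] ap \<beta> by (metis sets_measure_pmf UNIV_I order_trans)
    have tail: "measure_pmf.prob \<nu> {k. real M < real_of_int \<bar>k\<bar>} \<le> a / real M"
      using tail_bound[OF fm] Mpos assms by simp
    have "A \<subseteq> S \<union> {k. real M < real_of_int \<bar>k\<bar>}" unfolding S_def by auto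
    hence "measure_pmf.prob \<nu> A \<le> measure_pmf.prob \<nu> (S \<union> {k. real M < real_of_int \<bar>k\<bar>})"
      by (intro measure_pmf.finite_measure_mono) auto
    also have "\<dots> \<le> measure_pmf.prob \<nu> S + measure_pmf.prob \<nu> {k. real M < real_of_int \<bar>k\<bar>}"
      by (intro measure_subadditive) auto
    finally have PA: "measure_pmf.prob \<nu> A \<le> \<rho> + (1-\<rho>)/2" using PS tail aM by linarith
    have PC: "measure_pmf.prob \<nu> (UNIV - A) = 1 - measure_pmf.prob \<nu> A"
      using measure_pmf.prob_compl[of A \<nu>] by simp
    have intg: "integrable (measure_pmf \<nu>) g"
      by (intro measure_pmf.integrable_const_bound[where B=1]) (auto simp: g_def)
    have cd0: "0 \<le> 1 - cos \<delta>" by simp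
    have "(1 - cos \<delta>) * measure_pmf.prob \<nu> (UNIV - A)
          = measure_pmf.expectation \<nu> (\<lambda>k. (1 - cos \<delta>) * indicator (UNIV - A) k)"
      by simp
    also have "\<dots> \<le> measure_pmf.expectation \<nu> (\<lambda>k. 1 - g k)"
    proof (rule integral_mono)
      show "integrable (measure_pmf \<nu>) (\<lambda>k. (1 - cos \<delta>) * indicator (UNIV - A) k)"
        by (intro measure_pmf.integrable_const_bound[where B="1 - cos \<delta>"]) (auto simp: indicator_def)
      show "integrable (measure_pmf \<nu>) (\<lambda>k. 1 - g k)" using intg by simp
      fix k show "(1 - cos \<delta>) * indicator (UNIV - A) k \<le> 1 - g k"
        unfolding A_def g_def by (auto simp: indicator_def not_less)
    qed
    also have "\<dots> = 1 - norm z" unfolding nz using intg by (simp add: measure_pmf.prob_space)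
    finally have main0: "(1 - cos \<delta>) * measure_pmf.prob \<nu> (UNIV - A) \<le> 1 - norm z" .
    have "(1-\<rho>)/2 \<le> measure_pmf.prob \<nu> (UNIV - A)" unfolding PC using PA by argo
    hence "(1 - cos \<delta>) * ((1-\<rho>)/2) \<le> (1 - cos \<delta>) * measure_pmf.prob \<nu> (UNIV - A)"
      using cd0 by (rule mult_left_mono)
    hence main: "(1 - cos \<delta>) * ((1-\<rho>)/2) \<le> 1 - norm z" using main0 by linarith
    have e32: "\<epsilon> \<le> 1/32" unfolding \<epsilon>_def using \<eta>le by auto
    have e0: "0 \<le> \<epsilon>" unfolding \<epsilon>_def using \<eta>pos by auto
    have "2*pi*\<epsilon> \<le> (2*4)*(1/32)" using e32 e0 pi_less_4 by (intro mult_mono) auto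
    hence dle: "\<delta> \<le> 1" unfolding \<delta>_def by simp
    have dge: "0 \<le> \<delta>" unfolding \<delta>_def \<epsilon>_def using \<eta>pos by auto
    have cosb: "\<delta>\<^sup>2 / 4 \<le> 1 - cos \<delta>" using one_minus_cos_ge dle dge by simp
    have "3*3 \<le> pi*pi" using pi_gt3 by (intro mult_mono) auto
    hence pi2: "9 \<le> pi\<^sup>2" by (simp add: power2_eq_square)
    have "\<eta>^2 * t^2 \<le> \<delta>\<^sup>2 / 4"
    proof (cases "\<bar>t\<bar> < \<eta>")
      case True
      hence "\<delta>\<^sup>2 / 4 = pi\<^sup>2/16 * t\<^sup>2" unfolding \<delta>_def \<epsilon>_def by (simp add: power2_eq_square field_simps)
      have "\<eta>^2 \<le> pi\<^sup>2/16"
      proof -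
        have "\<eta>^2 \<le> (1/8)^2" using \<eta>le \<eta>pos by (intro power_mono) auto
        thus ?thesis using pi2 by (simp add: power_divide)
      qed
      hence "\<eta>^2 * t^2 \<le> pi\<^sup>2/16 * t\<^sup>2" by (intro mult_right_mono) auto
      thus ?thesis using \<open>\<delta>\<^sup>2 / 4 = pi\<^sup>2/16 * t\<^sup>2\<close> by simp
    next
      case False
      hence "\<delta>\<^sup>2 / 4 = pi\<^sup>2/16 * \<eta>\<^sup>2" unfolding \<delta>_def \<epsilon>_def by (simp add: power2_eq_square field_simps)
      have "t^2 \<le> 1/4"
      proof -
        have "\<bar>t\<bar>^2 \<le> (1/2)^2" using t1 t2 by (intro power_mono) auto
        thus ?thesis by (simp add: power_divide)
      qed
      hence "\<eta>^2 * t^2 \<le> \<eta>^2 * (1/4)" by (intro mult_left_mono) auto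
      also have "\<dots> \<le> pi\<^sup>2/16 * \<eta>^2" using mult_right_mono[of 4 "pi^2" "\<eta>^2"] pi2 by simp
      finally show ?thesis using \<open>\<delta>\<^sup>2 / 4 = pi\<^sup>2/16 * \<eta>\<^sup>2\<close> by simp
    qed
    hence "\<eta>^2 * t^2 \<le> 1 - cos \<delta>" using cosb by linarith
    hence "(\<eta>^2 * t^2) * ((1-\<rho>)/2) \<le> (1 - cos \<delta>) * ((1-\<rho>)/2)"
      using assms by (intro mult_right_mono) auto
    moreover have "c * t\<^sup>2 = (\<eta>^2 * t^2) * ((1-\<rho>)/2)" unfolding c_def by simp
    ultimately have "c * t\<^sup>2 \<le> 1 - norm z" using main by linarith
    hence "norm z \<le> 1 + (- c * t\<^sup>2)" by simp
    also have "\<dots> \<le> exp (- c * t\<^sup>2)" by (rule exp_ge_add_one_self)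
    finally show "norm (fourier_pmf \<nu> t) \<le> exp (- c * t\<^sup>2)" unfolding z_def .
  qed
qed

end
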